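(* Let $G$ be a graph, let $v$ be a leaf (vertex of degree $1$) of $G$, and let $N(v)=\{w\}$. Then $$\phi(G)\le \sum_{u\in N(w)\setminus\{v\}}\phi\big(G-(N[w]\cup N[u])\big)+\phi(G-v-w)+\phi(G-N[w]).$$
   Context: Graphs are finite and simple. $N(v)$ is the neighborhood of $v$, $N[v]=N(v)\cup\{v\}$, and $G-S$ is the subgraph induced by $V(G)\setminus S$. A subset $F$ of vertices is a dissociation set if $G[F]$ has maximum degree at most $1$; a maximal dissociation set is one not properly contained in another dissociation set; $\phi(G)$ is the number of maximal dissociation sets of $G$, with $\phi=1$ for the graph with no vertices. *)

theory Defs
  imports Main
begin

text \<open>Induced subgraphs G - S are represented
  by the vertex set V - S with the same (restricted) edge relation.\<close>

definition simple_graph :: "'a set \<Rightarrow> ('a \<Rightarrow> 'a \<Rightarrow> bool) \<Rightarrow> bool" where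
  "simple_graph V E \<longleftrightarrow> finite V \<and> (\<forall>x\<in>V. \<forall>y\<in>V. E x y \<longrightarrow> E y x) \<and> (\<forall>x\<in>V. \<not> E x x)"

definition nbhd :: "'a set \<Rightarrow> ('a \<Rightarrow> 'a \<Rightarrow> bool) \<Rightarrow> 'a \<Rightarrow> 'a set" where
  "nbhd V E v = {u \<in> V. E v u}"

definition cnbhd :: "'a set \<Rightarrow> ('a \<Rightarrow> 'a \<Rightarrow> bool) \<Rightarrow> 'a \<Rightarrow> 'a set" where
  "cnbhd V E v = insert v (nbhd V E v)"

definition dissociation_set :: "'a set \<Rightarrow> ('a \<Rightarrow> 'a \<Rightarrow> bool) \<Rightarrow> 'a set \<Rightarrow> bool" where
  "dissociation_set V E F \<longleftrightarrow> F \<subseteq> V \<and> (\<forall>x\<in>F. card (nbhd F E x) \<le> 1)"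

definition maximal_dissociation_set :: "'a set \<Rightarrow> ('a \<Rightarrow> 'a \<Rightarrow> bool) \<Rightarrow> 'a set \<Rightarrow> bool" where
  "maximal_dissociation_set V E F \<longleftrightarrow> dissociation_set V E F \<and>
     (\<forall>F'. dissociation_set V E F' \<and> F \<subseteq> F' \<longrightarrow> F' = F)"

text \<open>Number of maximal dissociation sets of G[V]; for V = {} this is 1 (only the empty set).\<close>
definition phi :: "'a set \<Rightarrow> ('a \<Rightarrow> 'a \<Rightarrow> bool) \<Rightarrow> nat" where
  "phi V E = card {F. maximal_dissociation_set V E F}"

end

theory Submission
  imports Defs
begin

lemma nbhd_Un: "nbhd (A \<union> D) E x = nbhd A E x \<union> nbhd D E x"
  unfolding nbhd_def by auto

lemma glue:
  assumes "dissociation_set V E A" "dissociation_set V E D"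
    and "\<forall>x\<in>A. \<forall>d\<in>D. \<not> E x d \<and> \<not> E d x"
  shows "dissociation_set V E (A \<union> D)"
proof -
  have "card (nbhd (A \<union> D) E x) \<le> 1" if x: "x \<in> A \<union> D" for x
  proof (cases "x \<in> A")
    case True
    hence "nbhd D E x = {}" using assms(3) unfolding nbhd_def by auto
    thus ?thesis using True assms(1) unfolding nbhd_Un dissociation_set_def by auto
  next
    case False
    hence xD: "x \<in> D" using x by auto
    hence "nbhd A E x = {}" using assms(3) unfolding nbhd_def by auto
    thus ?thesis using xD assms(2) unfolding nbhd_Un dissociation_set_def by auto
  qed
  thus ?thesis using assms(1,2) unfolding dissociation_set_def by auto
qed

lemma diss_subset:
  assumes "finite V" "dissociation_set V E F" "H \<subseteq> F"
  shows "dissociation_set V E H"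
proof -
  have "card (nbhd H E x) \<le> 1" if "x \<in> H" for x
  proof -
    have "finite (nbhd F E x)" using assms unfolding dissociation_set_def nbhd_def
      by (metis (no_types, lifting) finite_subset mem_Collect_eq subsetI)
    moreover have "nbhd H E x \<subseteq> nbhd F E x" using assms(3) unfolding nbhd_def by auto
    ultimately have "card (nbhd H E x) \<le> card (nbhd F E x)" by (rule card_mono)
    thus ?thesis using assms that unfolding dissociation_set_def by fastforce
  qed
  thus ?thesis using assms unfolding dissociation_set_def by auto
qed

lemma transfer:
  assumes fin: "finite V" and M: "maximal_dissociation_set V E F"
    and "D \<subseteq> F" "W \<subseteq> V" "F - D \<subseteq> W" "D \<inter> W = {}"
    and noe: "\<forall>x\<in>W. \<forall>d\<in>D. \<not> E x d \<and> \<not> E d x"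
  shows "maximal_dissociation_set W E (F - D)"
proof -
  have dF: "dissociation_set V E F" using M unfolding maximal_dissociation_set_def by auto
  have d1: "dissociation_set V E (F - D)" using diss_subset[OF fin dF] by auto
  have d2: "dissociation_set W E (F - D)" using d1 assms(5) unfolding dissociation_set_def by auto
  have dD: "dissociation_set V E D" using diss_subset[OF fin dF assms(3)] .
  have "F' = F - D" if F': "dissociation_set W E F'" "F - D \<subseteq> F'" for F'
  proof -
    have FW: "F' \<subseteq> W" using F' unfolding dissociation_set_def by auto
    have "dissociation_set V E F'" using F' FW assms(4) unfolding dissociation_set_def by auto
    hence "dissociation_set V E (F' \<union> D)" using glue dD noe FW by blast
    moreover have "F \<subseteq> F' \<union> D" using F' by auto
    ultimately have "F' \<union> D = F" using M unfolding maximal_dissociation_set_def by blast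
    thus ?thesis using FW assms(6) by auto
  qed
  thus ?thesis using d2 unfolding maximal_dissociation_set_def by auto
qed

lemma card_class:
  assumes fin: "finite W" and sub: "\<And>F. F \<in> X \<Longrightarrow> D \<subseteq> F \<and> maximal_dissociation_set W E (F - D)"
  shows "card X \<le> phi W E"
proof -
  have "inj_on (\<lambda>F. F - D) X"
    by (rule inj_onI) (metis Diff_partition sub)
  moreover have "(\<lambda>F. F - D) ` X \<subseteq> {F. maximal_dissociation_set W E F}" using sub by auto
  moreover have "finite {F. maximal_dissociation_set W E F}"
    by (rule finite_subset[of _ "Pow W"]) (use fin in \<open>auto simp: maximal_dissociation_set_def dissociation_set_def\<close>)
  ultimately show ?thesis unfolding phi_def by (rule card_inj_on_le)
qed

theorem lemma2p3:
  fixes V :: "'a set" and E :: "'a \<Rightarrow> 'a \<Rightarrow> bool" and v w :: 'a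
  assumes "simple_graph V E"
    and "v \<in> V"
    and "nbhd V E v = {w}"
  shows "phi V E \<le>
           (\<Sum>u \<in> nbhd V E w - {v}. phi (V - (cnbhd V E w \<union> cnbhd V E u)) E)
           + phi (V - {v, w}) E
           + phi (V - cnbhd V E w) E"
proof -
  have fin: "finite V" and sym: "\<And>x y. x \<in> V \<Longrightarrow> y \<in> V \<Longrightarrow> E x y \<Longrightarrow> E y x"
    and irr: "\<And>x. x \<in> V \<Longrightarrow> \<not> E x x"
    using assms(1) unfolding simple_graph_def by auto
  have wV: "w \<in> V" and Evw: "E v w" using assms(3) unfolding nbhd_def by auto
  have Ev: "\<And>x. x \<in> V \<Longrightarrow> E v x \<Longrightarrow> x = w" using assms(3) unfolding nbhd_def by auto
  have wv: "w \<noteq> v" using irr[OF assms(2)] Evw by auto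
  have Ewv: "E w v" using sym[OF assms(2) wV Evw] .
  define M where "M = {F. maximal_dissociation_set V E F}"
  define A where "A u = {F\<in>M. v \<notin> F \<and> w \<in> F \<and> u \<in> F}" for u
  define B where "B = {F\<in>M. v \<in> F \<and> w \<in> F}"
  define C where "C = {F\<in>M. v \<in> F \<and> w \<notin> F}"
  have deg: "\<And>F x a b. dissociation_set V E F \<Longrightarrow> x \<in> F \<Longrightarrow> a \<in> F \<Longrightarrow> b \<in> F \<Longrightarrow> E x a \<Longrightarrow> E x b \<Longrightarrow> a = b"
  proof -
    fix F x a b assume d: "dissociation_set V E F" and h: "x \<in> F" "a \<in> F" "b \<in> F" "E x a" "E x b"
    have "finite (nbhd F E x)" using d fin unfolding dissociation_set_def nbhd_def
      by (metis (no_types, lifting) finite_subset mem_Collect_eq subsetI)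
    moreover have "card (nbhd F E x) \<le> Suc 0" using d h unfolding dissociation_set_def by auto
    ultimately show "a = b" using h card_le_Suc0_iff_eq unfolding nbhd_def by fastforce
  qed
  have cover: "M \<subseteq> (\<Union>u\<in>nbhd V E w - {v}. A u) \<union> B \<union> C"
  proof
    fix F assume FM: "F \<in> M"
    hence mF: "maximal_dissociation_set V E F" unfolding M_def by auto
    hence dF: "dissociation_set V E F" and FV: "F \<subseteq> V" unfolding maximal_dissociation_set_def dissociation_set_def by auto
    show "F \<in> (\<Union>u\<in>nbhd V E w - {v}. A u) \<union> B \<union> C"
    proof (cases "v \<in> F")
      case True thus ?thesis using FM unfolding B_def C_def by auto
    next
      case vF: False
      have "nbhd {v} E v = {}" using irr[OF assms(2)] unfolding nbhd_def by auto
      hence dv: "dissociation_set V E {v}" using assms(2)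
        unfolding dissociation_set_def by auto
      have wF: "w \<in> F"
      proof (rule ccontr)
        assume "w \<notin> F"
        hence "\<forall>x\<in>F. \<forall>d\<in>{v}. \<not> E x d \<and> \<not> E d x" using FV Ev sym assms(2) by blast
        hence "dissociation_set V E (F \<union> {v})" using glue dF dv by blast
        hence "F \<union> {v} = F" using mF unfolding maximal_dissociation_set_def by blast
        thus False using vF by auto
      qed
      have "\<exists>u\<in>F. E w u"
      proof (rule ccontr)
        assume "\<not> (\<exists>u\<in>F. E w u)"
        hence nu: "\<And>u. u \<in> F \<Longrightarrow> \<not> E w u" by blast
        have d0: "dissociation_set V E (F - {w})" using diss_subset[OF fin dF] by auto
        have dvw: "dissociation_set V E {v, w}"
        proof -
          have "nbhd {v,w} E v = {w}" "nbhd {v,w} E w = {v}"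
            using Evw Ewv irr[OF assms(2)] irr[OF wV] unfolding nbhd_def by auto
          thus ?thesis using assms(2) wV unfolding dissociation_set_def by auto
        qed
        have "\<forall>x\<in>F - {w}. \<forall>d\<in>{v,w}. \<not> E x d \<and> \<not> E d x"
        proof (intro ballI)
          fix x d assume x: "x \<in> F - {w}" and d: "d \<in> {v,w}"
          have xV: "x \<in> V" using x FV by auto
          have "\<not> E v x" using Ev[OF xV] x by auto
          moreover have "\<not> E w x" using nu x by auto
          moreover have "\<not> E x v" using sym[OF xV assms(2)] \<open>\<not> E v x\<close> by auto
          moreover have "\<not> E x w" using sym[OF xV wV] \<open>\<not> E w x\<close> by auto
          ultimately show "\<not> E x d \<and> \<not> E d x" using d by auto
        qed
        hence "dissociation_set V E (F - {w} \<union> {v,w})" using glue d0 dvw by blast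
        moreover have "F \<subseteq> F - {w} \<union> {v,w}" by auto
        ultimately have "F - {w} \<union> {v,w} = F" using mF unfolding maximal_dissociation_set_def by blast
        thus False using vF by auto
      qed
      then obtain u where uF: "u \<in> F" and Ewu: "E w u" by blast
      have "u \<in> nbhd V E w - {v}" using uF Ewu FV vF unfolding nbhd_def by auto
      thus ?thesis using FM vF wF uF unfolding A_def by auto
    qed
  qed
  have finM: "finite M" unfolding M_def
    by (rule finite_subset[of _ "Pow V"]) (use fin in \<open>auto simp: maximal_dissociation_set_def dissociation_set_def\<close>)
  have finN: "finite (nbhd V E w - {v})" using fin unfolding nbhd_def by auto
  have cA: "card (A u) \<le> phi (V - (cnbhd V E w \<union> cnbhd V E u)) E" if u: "u \<in> nbhd V E w - {v}" for u
  proof (rule card_class)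
    show "finite (V - (cnbhd V E w \<union> cnbhd V E u))" using fin by auto
    fix F assume FA: "F \<in> A u"
    hence mF: "maximal_dissociation_set V E F" and vF: "v \<notin> F" and wF: "w \<in> F" and uF: "u \<in> F"
      unfolding A_def M_def by auto
    hence dF: "dissociation_set V E F" and FV: "F \<subseteq> V" unfolding maximal_dissociation_set_def dissociation_set_def by auto
    have uV: "u \<in> V" and Ewu: "E w u" using u unfolding nbhd_def by auto
    have Euw: "E u w" using sym[OF wV uV Ewu] .
    have sub: "F - {w,u} \<subseteq> V - (cnbhd V E w \<union> cnbhd V E u)"
    proof
      fix x assume x: "x \<in> F - {w,u}"
      have "\<not> E w x" using deg[OF dF wF _ uF _ Ewu, of x] x by auto
      moreover have "\<not> E u x" using deg[OF dF uF _ wF _ Euw, of x] x by auto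
      ultimately show "x \<in> V - (cnbhd V E w \<union> cnbhd V E u)" using x FV
        unfolding cnbhd_def nbhd_def by auto
    qed
    have "maximal_dissociation_set (V - (cnbhd V E w \<union> cnbhd V E u)) E (F - {w,u})"
    proof (rule transfer[OF fin mF])
      show "{w,u} \<subseteq> F" using wF uF by auto
      show "V - (cnbhd V E w \<union> cnbhd V E u) \<subseteq> V" by auto
      show "F - {w,u} \<subseteq> V - (cnbhd V E w \<union> cnbhd V E u)" by (rule sub)
      show "{w,u} \<inter> (V - (cnbhd V E w \<union> cnbhd V E u)) = {}" unfolding cnbhd_def by auto
      show "\<forall>x\<in>V - (cnbhd V E w \<union> cnbhd V E u). \<forall>d\<in>{w,u}. \<not> E x d \<and> \<not> E d x"
        using sym wV uV unfolding cnbhd_def nbhd_def by blast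
    qed
    thus "{w,u} \<subseteq> F \<and> maximal_dissociation_set (V - (cnbhd V E w \<union> cnbhd V E u)) E (F - {w,u})"
      using wF uF by auto
  qed
  have cB: "card B \<le> phi (V - cnbhd V E w) E"
  proof (rule card_class)
    show "finite (V - cnbhd V E w)" using fin by auto
    fix F assume FB: "F \<in> B"
    hence mF: "maximal_dissociation_set V E F" and vF: "v \<in> F" and wF: "w \<in> F"
      unfolding B_def M_def by auto
    hence dF: "dissociation_set V E F" and FV: "F \<subseteq> V" unfolding maximal_dissociation_set_def dissociation_set_def by auto
    have sub: "F - {v,w} \<subseteq> V - cnbhd V E w"
    proof
      fix x assume x: "x \<in> F - {v,w}"
      have "\<not> E w x" using deg[OF dF wF _ vF _ Ewv, of x] x by auto
      thus "x \<in> V - cnbhd V E w" using x FV unfolding cnbhd_def nbhd_def by auto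
    qed
    have "maximal_dissociation_set (V - cnbhd V E w) E (F - {v,w})"
    proof (rule transfer[OF fin mF])
      show "{v,w} \<subseteq> F" using wF vF by auto
      show "V - cnbhd V E w \<subseteq> V" by auto
      show "F - {v,w} \<subseteq> V - cnbhd V E w" by (rule sub)
      show "{v,w} \<inter> (V - cnbhd V E w) = {}" using Ewv assms(2) unfolding cnbhd_def nbhd_def by auto
      show "\<forall>x\<in>V - cnbhd V E w. \<forall>d\<in>{v,w}. \<not> E x d \<and> \<not> E d x"
        using sym wV assms(2) Ev unfolding cnbhd_def nbhd_def by blast
    qed
    thus "{v,w} \<subseteq> F \<and> maximal_dissociation_set (V - cnbhd V E w) E (F - {v,w})"
      using wF vF by auto
  qed
  have cC: "card C \<le> phi (V - {v,w}) E"
  proof (rule card_class)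
    show "finite (V - {v,w})" using fin by auto
    fix F assume FC: "F \<in> C"
    hence mF: "maximal_dissociation_set V E F" and vF: "v \<in> F" and wF: "w \<notin> F"
      unfolding C_def M_def by auto
    hence dF: "dissociation_set V E F" and FV: "F \<subseteq> V" unfolding maximal_dissociation_set_def dissociation_set_def by auto
    have "maximal_dissociation_set (V - {v,w}) E (F - {v})"
    proof (rule transfer[OF fin mF])
      show "{v} \<subseteq> F" using vF by auto
      show "V - {v,w} \<subseteq> V" by auto
      show "F - {v} \<subseteq> V - {v,w}" using FV wF by auto
      show "{v} \<inter> (V - {v,w}) = {}" by auto
      show "\<forall>x\<in>V - {v,w}. \<forall>d\<in>{v}. \<not> E x d \<and> \<not> E d x"
        using sym assms(2) Ev by blast
    qed
    thus "{v} \<subseteq> F \<and> maximal_dissociation_set (V - {v,w}) E (F - {v})"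
      using vF by auto
  qed
  have "phi V E = card M" unfolding phi_def M_def ..
  also have "\<dots> \<le> card ((\<Union>u\<in>nbhd V E w - {v}. A u) \<union> B \<union> C)"
    by (rule card_mono[OF _ cover]) (rule finite_subset[OF _ finM], auto simp: A_def B_def C_def)
  also have "\<dots> \<le> card (\<Union>u\<in>nbhd V E w - {v}. A u) + card B + card C"
    by (meson add_right_mono card_Un_le le_trans)
  also have "card (\<Union>u\<in>nbhd V E w - {v}. A u) \<le> (\<Sum>u\<in>nbhd V E w - {v}. card (A u))"
    by (rule card_UN_le[OF finN])
  also have "\<dots> \<le> (\<Sum>u \<in> nbhd V E w - {v}. phi (V - (cnbhd V E w \<union> cnbhd V E u)) E)"
    by (rule sum_mono) (rule cA)
  finally show ?thesis using cB cC by linarith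
qed

end
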